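(* Let $M$, $A$ and $B$ be three packed matrices. Then, (1) $\mathrm{ov}(A, B) \leq_{\mathrm{M}} M$ if and only if there are two packed matrices $A'$ and $B'$ such that $A \leq_{\mathrm{M}} A'$, $B \leq_{\mathrm{M}} B'$, and $M \in \mathrm{Sh}_c(A', B')$; (2) $M \leq_{\mathrm{M}} \mathrm{un}(A, B)$ if and only if there are two packed matrices $A'$ and $B'$ such that $A' \leq_{\mathrm{M}} A$, $B' \leq_{\mathrm{M}} B$, and $M \in \mathrm{Sh}_c(A', B')$.
   Context: Let $k \geq 1$ and $A_k := \{0,1,\dots,k\}$. A ($k$-)packed matrix of size $n$ is an $n\times n$ matrix with entries in $A_k$ with at least one nonzero entry in each row and column. For packed $M_1, M_2$ of sizes $n_1, n_2$: $\mathrm{ov}(M_1,M_2) := \begin{pmatrix} M_1 & 0 \\ 0 & M_2\end{pmatrix}$ (over operator) and $\mathrm{un}(M_1,M_2) := \begin{pmatrix} 0 & M_1 \\ M_2 & 0 \end{pmatrix}$ (under operator), with zero blocks of appropriate sizes. The column shifted shuffle $\mathrm{Sh}_c(M_1,M_2)$ is the set of all matrices obtained by shuffling the columns of $M_1$ with an $n_2 \times n_1$ zero block placed below it, with the columns of $M_2$ with an $n_1 \times n_2$ zero block placed above it. Define $\to$ on packed matrices of size $n$: $M_1 \to M_2$ if there is $i \in [n-1]$ such that, with $s$ the number of $0$ ending the $i$th column of $M_1$ and $p$ the number of $0$ starting its $(i+1)$st column, $s + p \geq n$ and $M_2$ is obtained from $M_1$ by exchanging its $i$th and $(i+1)$st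 columns. $\leq_{\mathrm{M}}$ is the reflexive and transitive closure of $\to$. *)

theory Defs
  imports Main
begin

text \<open>A matrix is represented as the list of its columns; each column is a list of
entries, top row first. So for a matrix M of size n, M ! j ! i is the entry in
row i, column j (0-indexed).\<close>

type_synonym mat = "nat list list"

definition packed :: "nat \<Rightarrow> mat \<Rightarrow> bool" where
  "packed k M \<longleftrightarrow>
     (let n = length M in
       (\<forall>c\<in>set M. length c = n \<and> set c \<subseteq> {0..k}) \<and>
       (\<forall>c\<in>set M. \<exists>x\<in>set c. x \<noteq> 0) \<and>
       (\<forall>i<n. \<exists>j<n. M ! j ! i \<noteq> 0))"

definition ov :: "mat \<Rightarrow> mat \<Rightarrow> mat" where
  "ov M1 M2 = map (\<lambda>c. c @ replicate (length M2) 0) M1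
            @ map (\<lambda>c. replicate (length M1) 0 @ c) M2"

definition un :: "mat \<Rightarrow> mat \<Rightarrow> mat" where
  "un M1 M2 = map (\<lambda>c. replicate (length M1) 0 @ c) M2
            @ map (\<lambda>c. c @ replicate (length M2) 0) M1"

definition Sh_c :: "mat \<Rightarrow> mat \<Rightarrow> mat set" where
  "Sh_c M1 M2 = shuffles (map (\<lambda>c. c @ replicate (length M2) 0) M1)
                         (map (\<lambda>c. replicate (length M1) 0 @ c) M2)"

definition trailing_zeros :: "nat list \<Rightarrow> nat" where
  "trailing_zeros c = length (takeWhile (\<lambda>x. x = 0) (rev c))"

definition leading_zeros :: "nat list \<Rightarrow> nat" where
  "leading_zeros c = length (takeWhile (\<lambda>x. x = 0) c)"

text \<open>One step of the relation; column indices are 0-based, so the paper's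
i \<in> [n-1] (columns i, i+1, 1-based) corresponds to i with Suc i < n here.\<close>
definition mstep :: "nat \<Rightarrow> mat \<Rightarrow> mat \<Rightarrow> bool" where
  "mstep k M1 M2 \<longleftrightarrow> packed k M1 \<and>
     (\<exists>i. Suc i < length M1 \<and>
          trailing_zeros (M1 ! i) + leading_zeros (M1 ! Suc i) \<ge> length M1 \<and>
          M2 = M1[i := M1 ! Suc i, Suc i := M1 ! i])"

definition mle :: "nat \<Rightarrow> mat \<Rightarrow> mat \<Rightarrow> bool" where
  "mle k = (mstep k)\<^sup>*\<^sup>*"

end

theory Submission imports Defs begin

abbreviation tz where "tz \<equiv> trailing_zeros"
abbreviation lz where "lz \<equiv> leading_zeros"

lemma tz_app_rep: "tz (c @ replicate m 0) = tz c + m"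
  unfolding trailing_zeros_def by (simp, subst takeWhile_append2) auto
lemma lz_rep_app: "lz (replicate m 0 @ c) = m + lz c"
  unfolding leading_zeros_def by (subst takeWhile_append2) auto
lemma ltw_less: "x \<in> set xs \<Longrightarrow> \<not> P x \<Longrightarrow> length (takeWhile P xs) < length xs"
  by (induction xs) auto
lemma lz_app_rep: "\<exists>x\<in>set c. x \<noteq> 0 \<Longrightarrow> lz (c @ replicate m 0) = lz c"
  by (auto simp add: leading_zeros_def)
lemma tz_rep_app: "\<exists>x\<in>set c. x \<noteq> 0 \<Longrightarrow> tz (replicate m 0 @ c) = tz c"
  by (auto simp add: trailing_zeros_def)
lemma tz_less: "\<exists>x\<in>set c. x \<noteq> 0 \<Longrightarrow> tz c < length c"
proof -
  assume "\<exists>x\<in>set c. x \<noteq> 0"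
  then obtain x where "x \<in> set (rev c)" "x \<noteq> 0" by auto
  hence "length (takeWhile (\<lambda>x. x = 0) (rev c)) < length (rev c)"
    by (rule ltw_less)
  thus ?thesis by (simp add: trailing_zeros_def)
qed
lemma lz_less: "\<exists>x\<in>set c. x \<noteq> 0 \<Longrightarrow> lz c < length c"
proof -
  assume "\<exists>x\<in>set c. x \<noteq> 0"
  then obtain x where "x \<in> set c" "x \<noteq> 0" by auto
  hence "length (takeWhile (\<lambda>x. x = 0) c) < length c"
    by (rule ltw_less)
  thus ?thesis by (simp add: leading_zeros_def)
qed

lemma packed_alt: "packed k M \<longleftrightarrow>
  (\<forall>c\<in>set M. length c = length M \<and> set c \<subseteq> {0..k}) \<and>
  (\<forall>c\<in>set M. \<exists>x\<in>set c. x \<noteq> 0) \<and>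
  (\<forall>i<length M. \<exists>c\<in>set M. c ! i \<noteq> 0)"
  proof -
  have "(\<exists>j<length M. M ! j ! i \<noteq> 0) \<longleftrightarrow> (\<exists>c\<in>set M. c ! i \<noteq> 0)" for i
    by (metis in_set_conv_nth)
  thus ?thesis unfolding packed_def Let_def by simp
qed

lemma packed_cong: "set M = set M' \<Longrightarrow> length M = length M' \<Longrightarrow> packed k M = packed k M'"
  by (simp add: packed_alt)

lemma mstep_iff: "mstep k M1 M2 \<longleftrightarrow> packed k M1 \<and>
  (\<exists>us x y vs. M1 = us@x#y#vs \<and> M2 = us@y#x#vs \<and> tz x + lz y \<ge> length M1)"
proof
  assume "mstep k M1 M2"
  then obtain i where p: "packed k M1" and i: "Suc i < length M1"
    and c: "tz (M1 ! i) + lz (M1 ! Suc i) \<ge> length M1"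
    and m2: "M2 = M1[i := M1 ! Suc i, Suc i := M1 ! i]" unfolding mstep_def by blast
  have d: "M1 = take i M1 @ M1!i # M1 ! Suc i # drop (Suc (Suc i)) M1"
    using i by (metis Cons_nth_drop_Suc Suc_lessD append_take_drop_id)
  have "M2 = take i M1 @ M1 ! Suc i # M1!i # drop (Suc (Suc i)) M1"
    using i unfolding m2 by (subst d) (simp add: list_update_append)
  with d p c show "packed k M1 \<and>
  (\<exists>us x y vs. M1 = us@x#y#vs \<and> M2 = us@y#x#vs \<and> tz x + lz y \<ge> length M1)" by blast
next
  assume "packed k M1 \<and>
  (\<exists>us x y vs. M1 = us@x#y#vs \<and> M2 = us@y#x#vs \<and> tz x + lz y \<ge> length M1)"
  then obtain us x y vs where "packed k M1" "M1 = us@x#y#vs" "M2 = us@y#x#vs" "tz x + lz y \<ge> length M1"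
    by blast
  thus "mstep k M1 M2" unfolding mstep_def
    by (intro conjI exI[of _ "length us"]) (simp_all add: nth_append list_update_append)
qed

lemma mstep_props: "mstep k X Y \<Longrightarrow> set Y = set X \<and> length Y = length X \<and> packed k Y"
proof -
  assume "mstep k X Y"
  then obtain us x y vs where "packed k X" "X = us@x#y#vs" "Y = us@y#x#vs" by (auto simp: mstep_iff)
  moreover have "set Y = set X" "length Y = length X" using calculation by auto
  ultimately show ?thesis using packed_cong by blast
qed

lemma mle_props: "mle k X Y \<Longrightarrow> set Y = set X \<and> length Y = length X \<and> (packed k X \<longrightarrow> packed k Y)"
  unfolding mle_def
  by (induction rule: rtranclp_induct) (auto dest: mstep_props)

lemma mstep_ctx:
  assumes "mstep k X Y" "packed k (pre @ map g X @ post)"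
    "\<And>c d. c\<in>set X \<Longrightarrow> d\<in>set X \<Longrightarrow> tz c + lz d \<ge> length X \<Longrightarrow>
        tz (g c) + lz (g d) \<ge> length pre + length X + length post"
  shows "mstep k (pre @ map g X @ post) (pre @ map g Y @ post)"
proof -
  obtain us x y vs where "X = us@x#y#vs" "Y = us@y#x#vs" "tz x + lz y \<ge> length X"
    using assms(1) by (auto simp: mstep_iff)
  moreover have "tz (g x) + lz (g y) \<ge> length pre + length X + length post"
    using assms(3) calculation by auto
  ultimately show ?thesis using assms(2) unfolding mstep_iff
    by (intro conjI exI[of _ "pre @ map g us"] exI[of _ "g x"] exI[of _ "g y"] exI[of _ "map g vs @ post"]) auto
qed

lemma mle_ctx:
  assumes "mle k X Y" "packed k (pre @ map g X @ post)"
    "\<And>c d. c\<in>set X \<Longrightarrow> d\<in>set X \<Longrightarrow> tz c + lz d \<ge> length X \<Longrightarrow>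
        tz (g c) + lz (g d) \<ge> length pre + length X + length post"
  shows "mle k (pre @ map g X @ post) (pre @ map g Y @ post)"
  using assms(1)[unfolded mle_def]
proof (induction rule: rtranclp_induct)
  case base thus ?case by (simp add: mle_def)
next
  case (step Y Z)
  have m: "mle k X Y" using step(1) by (simp add: mle_def)
  have "packed k (pre @ map g Y @ post)" using mle_props[OF step(3)] assms(2) by blast
  moreover have "set Y = set X" "length Y = length X" using mle_props[OF m] by auto
  ultimately have "mstep k (pre @ map g Y @ post) (pre @ map g Z @ post)"
    using assms(3) by (intro mstep_ctx[OF step(2)]) auto
  thus ?case using step(3) unfolding mle_def by simp
qed


lemma mle_trans: "mle k X Y \<Longrightarrow> mle k Y Z \<Longrightarrow> mle k X Z"
  unfolding mle_def by simp

lemma mstep_mle: "mstep k X Y \<Longrightarrow> mle k X Y"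
  unfolding mle_def by simp

lemma mle_refl: "mle k X X"
  unfolding mle_def by simp

lemma swap_mstep:
  assumes "packed k (us@x#y#vs)" "tz x + lz y \<ge> length (us@x#y#vs)"
  shows "mstep k (us@x#y#vs) (us@y#x#vs)"
  using assms unfolding mstep_iff by blast

lemma move_left:
  assumes "\<forall>w\<in>set ws. tz w + lz y \<ge> length (pre @ ws @ y # post)"
    "packed k (pre @ ws @ y # post)"
  shows "mle k (pre @ ws @ y # post) (pre @ y # ws @ post)"
  using assms
proof (induction ws arbitrary: pre)
  case Nil thus ?case by (simp add: mle_refl)
next
  case (Cons w ws)
  have "mle k ((pre @ [w]) @ ws @ y # post) ((pre @ [w]) @ y # ws @ post)"
    using Cons by (intro Cons.IH) auto
  hence m: "mle k (pre @ (w # ws) @ y # post) (pre @ w # y # ws @ post)" by simp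
  have "packed k (pre @ w # y # ws @ post)" using mle_props[OF m] Cons.prems by simp
  moreover have "tz w + lz y \<ge> length (pre @ w # y # ws @ post)" using Cons.prems by simp
  ultimately have "mstep k (pre @ w # y # ws @ post) (pre @ y # w # ws @ post)"
    by (rule swap_mstep)
  thus ?case using m by (simp add: mle_trans mstep_mle)
qed

lemma move_right:
  assumes "\<forall>w\<in>set ws. tz x + lz w \<ge> length (pre @ x # ws @ post)"
    "packed k (pre @ x # ws @ post)"
  shows "mle k (pre @ x # ws @ post) (pre @ ws @ x # post)"
  using assms
proof (induction ws arbitrary: pre)
  case Nil thus ?case by (simp add: mle_refl)
next
  case (Cons w ws)
  have s: "mstep k (pre @ x # w # ws @ post) (pre @ w # x # ws @ post)"
    using Cons.prems by (intro swap_mstep) auto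
  have "packed k (pre @ w # x # ws @ post)" using mstep_props[OF s] by simp
  hence "mle k ((pre @ [w]) @ x # ws @ post) ((pre @ [w]) @ ws @ x # post)"
    using Cons.prems by (intro Cons.IH) auto
  hence "mle k (pre @ w # x # ws @ post) (pre @ w # ws @ x # post)" by simp
  hence "mle k (pre @ x # w # ws @ post) (pre @ w # ws @ x # post)"
    using s by (meson mle_trans mstep_mle)
  thus ?case by simp
qed

lemma shuffle_up:
  assumes "zs \<in> shuffles xs ys"
    "\<forall>x\<in>set xs. \<forall>y\<in>set ys. tz x + lz y \<ge> length (pre @ xs @ ys)"
    "packed k (pre @ xs @ ys)"
  shows "mle k (pre @ xs @ ys) (pre @ zs)"
  using assms
proof (induction xs ys arbitrary: pre zs rule: shuffles.induct)
  case (1 ys) thus ?case by (simp add: mle_refl)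
next
  case (2 xs) thus ?case by (simp add: mle_refl)
next
  case (3 x xs y ys)
  from 3(3) consider (a) zs' where "zs = x # zs'" "zs' \<in> shuffles xs (y # ys)"
    | (b) zs' where "zs = y # zs'" "zs' \<in> shuffles (x # xs) ys" by auto
  thus ?case
  proof cases
    case a
    have "mle k ((pre @ [x]) @ xs @ y # ys) ((pre @ [x]) @ zs')"
      using 3(4,5) a by (intro 3(1)) auto
    thus ?thesis using a by simp
  next
    case b
    have m: "mle k (pre @ (x # xs) @ y # ys) (pre @ y # (x # xs) @ ys)"
      using 3(4,5) by (intro move_left) auto
    have "packed k ((pre @ [y]) @ (x # xs) @ ys)" using mle_props[OF m] 3(5) by simp
    hence "mle k ((pre @ [y]) @ (x # xs) @ ys) ((pre @ [y]) @ zs')"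
      using 3(4) b by (intro 3(2)) auto
    thus ?thesis using m b by (simp add: mle_trans)
  qed
qed

lemma shuffle_down:
  assumes "zs \<in> shuffles xs ys"
    "\<forall>x\<in>set xs. \<forall>y\<in>set ys. tz x + lz y \<ge> length (pre @ zs)"
    "packed k (pre @ zs)"
  shows "mle k (pre @ zs) (pre @ ys @ xs)"
  using assms
proof (induction xs ys arbitrary: pre zs rule: shuffles.induct)
  case (1 ys) thus ?case by (simp add: mle_refl)
next
  case (2 xs) thus ?case by (simp add: mle_refl)
next
  case (3 x xs y ys)
  have len: "length zs = Suc (length xs) + Suc (length ys)" using length_shuffles[OF 3(3)] by simp
  from 3(3) consider (a) zs' where "zs = x # zs'" "zs' \<in> shuffles xs (y # ys)"
    | (b) zs' where "zs = y # zs'" "zs' \<in> shuffles (x # xs) ys" by auto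
  thus ?case
  proof cases
    case a
    have m: "mle k ((pre @ [x]) @ zs') ((pre @ [x]) @ (y # ys) @ xs)"
      using 3(4,5) a by (intro 3(1)) auto
    hence m': "mle k (pre @ zs) (pre @ x # (y # ys) @ xs)" using a by simp
    have "mle k (pre @ x # (y # ys) @ xs) (pre @ (y # ys) @ x # xs)"
      using mle_props[OF m'] 3(4,5) len by (intro move_right) auto
    thus ?thesis using m' by (simp add: mle_trans)
  next
    case b
    have "mle k ((pre @ [y]) @ zs') ((pre @ [y]) @ ys @ (x # xs))"
      using 3(4,5) b by (intro 3(2)) auto
    thus ?thesis using b by simp
  qed
qed


lemma filter_sh:
  assumes "zs \<in> shuffles xs ys" "\<forall>x\<in>set xs. P x" "\<forall>y\<in>set ys. \<not> P y"
  shows "filter P zs = xs" "filter (\<lambda>x. \<not> P x) zs = ys"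
proof -
  have "filter P zs \<in> filter P ` shuffles xs ys" using assms(1) by blast
  also have "\<dots> = shuffles (filter P xs) (filter P ys)" by (rule filter_shuffles)
  also have "\<dots> = {xs}" using assms(2,3) by simp
  finally show "filter P zs = xs" by simp
  have "filter (\<lambda>x. \<not> P x) zs \<in> filter (\<lambda>x. \<not> P x) ` shuffles xs ys" using assms(1) by blast
  also have "\<dots> = shuffles (filter (\<lambda>x. \<not> P x) xs) (filter (\<lambda>x. \<not> P x) ys)" by (rule filter_shuffles)
  also have "\<dots> = {ys}" using assms(2,3) by simp
  finally show "filter (\<lambda>x. \<not> P x) zs = ys" by simp
qed

lemma map_split3:
  assumes "map f A = pu @ x # y # pv"
  obtains au a b av where "A = au @ a # b # av" "map f au = pu" "f a = x" "f b = y" "map f av = pv"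
proof -
  from assms obtain au r where 1: "A = au @ r" "map f au = pu" "map f r = x # y # pv"
    by (auto simp: map_eq_append_conv)
  from 1(3) obtain a r' where 2: "r = a # r'" "f a = x" "map f r' = y # pv"
    by (auto simp: map_eq_Cons_conv)
  from 2(3) obtain b av where 3: "r' = b # av" "f b = y" "map f av = pv"
    by (auto simp: map_eq_Cons_conv)
  show ?thesis using 1 2 3 that by simp
qed

lemma sh_cases:
  assumes N: "us @ x # y # vs \<in> Sh_c A' B'" and pA: "packed k A'" and pB: "packed k B'"
  shows "(\<exists>au a b av. A' = au @ a # b # av \<and> x = a @ replicate (length B') 0 \<and> y = b @ replicate (length B') 0
            \<and> us @ y # x # vs \<in> Sh_c (au @ b # a # av) B')
       \<or> (\<exists>bu a b bv. B' = bu @ a # b # bv \<and> x = replicate (length A') 0 @ a \<and> y = replicate (length A') 0 @ b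
            \<and> us @ y # x # vs \<in> Sh_c A' (bu @ b # a # bv))
       \<or> (\<exists>a b. a \<in> set A' \<and> b \<in> set B' \<and> x = a @ replicate (length B') 0 \<and> y = replicate (length A') 0 @ b
            \<and> us @ y # x # vs \<in> Sh_c A' B')
       \<or> (\<exists>a b. b \<in> set B' \<and> a \<in> set A' \<and> x = replicate (length A') 0 @ b \<and> y = a @ replicate (length B') 0
            \<and> us @ y # x # vs \<in> Sh_c A' B')"
proof -
  define n1 where "n1 = length A'"
  define n2 where "n2 = length B'"
  define f where "f = (\<lambda>c::nat list. c @ replicate n2 0)"
  define g where "g = (\<lambda>c::nat list. replicate n1 0 @ c)"
  define P where "P = (\<lambda>c::nat list. \<forall>z\<in>set (drop n1 c). z = 0)"
  define XA where "XA = map f A'"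
  define XB where "XB = map g B'"
  define N where "N = us @ x # y # vs"
  define N' where "N' = us @ y # x # vs"
  have sh: "Sh_c A' B' = shuffles XA XB"
    unfolding Sh_c_def XA_def XB_def f_def g_def n1_def n2_def ..
  have shg: "Sh_c A'' B'' = shuffles (map f A'') (map g B'')" if "length A'' = n1" "length B'' = n2" for A'' B''
    unfolding Sh_c_def f_def g_def using that by simp
  have PA: "\<forall>c\<in>set XA. P c"
  proof
    fix c assume "c \<in> set XA"
    then obtain a where "a \<in> set A'" "c = f a" unfolding XA_def by auto
    moreover have "length a = n1" using pA calculation(1) unfolding packed_alt n1_def by auto
    ultimately show "P c" unfolding P_def f_def by simp
  qed
  have PB: "\<forall>c\<in>set XB. \<not> P c"
  proof
    fix c assume "c \<in> set XB"
    then obtain b where "b \<in> set B'" "c = g b" unfolding XB_def by auto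
    moreover have "\<exists>z\<in>set b. z \<noteq> 0" using pB calculation(1) unfolding packed_alt by auto
    ultimately show "\<not> P c" unfolding P_def g_def by auto
  qed
  have NS: "N \<in> shuffles XA XB" using N sh N_def by simp
  have fA: "filter P N = XA" and fB: "filter (\<lambda>c. \<not> P c) N = XB"
    using filter_sh[OF NS PA PB] by auto
  have setN: "set N = set XA \<union> set XB" using set_shuffles[OF NS] .
  have xin: "x \<in> set N" "y \<in> set N" unfolding N_def by auto
  have part: "N' \<in> shuffles (filter P N') (filter (\<lambda>c. \<not> P c) N')" by (rule partition_in_shuffles)
  consider "P x" "P y" | "\<not> P x" "\<not> P y" | "P x" "\<not> P y" | "\<not> P x" "P y" by blast
  thus ?thesis
  proof cases
    case 1
    have "map f A' = filter P us @ x # y # filter P vs" using fA 1 unfolding XA_def N_def by simp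
    then obtain au a b av where d: "A' = au @ a # b # av" "map f au = filter P us" "f a = x" "f b = y"
       "map f av = filter P vs" by (rule map_split3)
    have l: "length (au @ b # a # av) = n1" using d(1) n1_def by simp
    have "filter P N' = map f (au @ b # a # av)" using d 1 unfolding N'_def by simp
    moreover have "filter (\<lambda>c. \<not> P c) N' = map g B'" using fB 1 unfolding N'_def N_def XB_def by simp
    ultimately have "N' \<in> Sh_c (au @ b # a # av) B'" using part shg[OF l] n2_def by simp
    thus ?thesis using d unfolding N'_def f_def n2_def by blast
  next
    case 2
    have "map g B' = filter (\<lambda>c. \<not> P c) us @ x # y # filter (\<lambda>c. \<not> P c) vs"
      using fB 2 unfolding XB_def N_def by simp
    then obtain bu a b bv where d: "B' = bu @ a # b # bv" "map g bu = filter (\<lambda>c. \<not> P c) us" "g a = x" "g b = y"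
       "map g bv = filter (\<lambda>c. \<not> P c) vs" by (rule map_split3)
    have l: "length (bu @ b # a # bv) = n2" using d(1) n2_def by simp
    have "filter (\<lambda>c. \<not> P c) N' = map g (bu @ b # a # bv)" using d 2 unfolding N'_def by simp
    moreover have "filter P N' = map f A'" using fA 2 unfolding N'_def N_def XA_def by simp
    ultimately have "N' \<in> Sh_c A' (bu @ b # a # bv)" using part shg[OF _ l] n1_def by simp
    thus ?thesis using d unfolding N'_def g_def n1_def by blast
  next
    case 3
    have "filter (\<lambda>c. \<not> P c) N' = XB" using fB 3 unfolding N'_def N_def by simp
    moreover have "filter P N' = XA" using fA 3 unfolding N'_def N_def by simp
    ultimately have sN: "N' \<in> Sh_c A' B'" using part sh by simp
    have "x \<in> set XA" using 3 xin setN PB by blast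
    moreover have "y \<in> set XB" using 3 xin setN PA by blast
    ultimately obtain a b where "a \<in> set A'" "b \<in> set B'" "x = f a" "y = g b"
      unfolding XA_def XB_def by auto
    thus ?thesis using sN unfolding N'_def f_def g_def n1_def n2_def by blast
  next
    case 4
    have "filter (\<lambda>c. \<not> P c) N' = XB" using fB 4 unfolding N'_def N_def by simp
    moreover have "filter P N' = XA" using fA 4 unfolding N'_def N_def by simp
    ultimately have sN: "N' \<in> Sh_c A' B'" using part sh by simp
    have "x \<in> set XB" using 4 xin setN PA by blast
    moreover have "y \<in> set XA" using 4 xin setN PB by blast
    ultimately obtain a b where "b \<in> set B'" "a \<in> set A'" "x = g b" "y = f a"
      unfolding XA_def XB_def by auto
    thus ?thesis using sN unfolding N'_def f_def g_def n1_def n2_def by blast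
  qed
qed


lemma nz_of_packed: "packed k A \<Longrightarrow> a \<in> set A \<Longrightarrow> \<exists>z\<in>set a. z \<noteq> 0"
  unfolding packed_alt by blast
lemma len_of_packed: "packed k A \<Longrightarrow> a \<in> set A \<Longrightarrow> length a = length A"
  unfolding packed_alt by blast

lemma bad_pair:
  assumes "packed k A'" "packed k B'" "a \<in> set A'" "b \<in> set B'"
  shows "tz (replicate (length A') 0 @ b) + lz (a @ replicate (length B') 0) < length A' + length B'"
proof -
  have na: "\<exists>z\<in>set a. z \<noteq> 0" and nb: "\<exists>z\<in>set b. z \<noteq> 0"
    using assms nz_of_packed by blast+
  have "tz b < length B'" using tz_less[OF nb] len_of_packed[OF assms(2,4)] by simp
  moreover have "lz a < length A'" using lz_less[OF na] len_of_packed[OF assms(1,3)] by simp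
  ultimately show ?thesis using tz_rep_app[OF nb] lz_app_rep[OF na] by simp
qed

lemma step_fwd:
  assumes N: "N \<in> Sh_c A' B'" and pA: "packed k A'" and pB: "packed k B'" and st: "mstep k N N'"
  shows "\<exists>A'' B''. mle k A' A'' \<and> mle k B' B'' \<and> N' \<in> Sh_c A'' B''"
proof -
  obtain us x y vs where d: "N = us@x#y#vs" "N' = us@y#x#vs" and c: "tz x + lz y \<ge> length N"
    using st by (auto simp: mstep_iff)
  have lN: "length N = length A' + length B'" using length_shuffles[OF N[unfolded Sh_c_def]] by simp
  from sh_cases[OF N[unfolded d] pA pB] show ?thesis
  proof (elim disjE exE conjE)
    fix au a b av assume h: "A' = au @ a # b # av" "x = a @ replicate (length B') 0"
      "y = b @ replicate (length B') 0" "us @ y # x # vs \<in> Sh_c (au @ b # a # av) B'"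
    have nb: "\<exists>z\<in>set b. z \<noteq> 0" using nz_of_packed[OF pA] h(1) by simp
    have "tz a + lz b \<ge> length A'" using c lN h tz_app_rep lz_app_rep[OF nb] by simp
    hence "mstep k A' (au @ b # a # av)" using pA h(1) by (simp add: swap_mstep)
    thus ?thesis using h(4) d(2) mstep_mle mle_refl by blast
  next
    fix bu a b bv assume h: "B' = bu @ a # b # bv" "x = replicate (length A') 0 @ a"
      "y = replicate (length A') 0 @ b" "us @ y # x # vs \<in> Sh_c A' (bu @ b # a # bv)"
    have na: "\<exists>z\<in>set a. z \<noteq> 0" using nz_of_packed[OF pB] h(1) by simp
    have "tz a + lz b \<ge> length B'" using c lN h lz_rep_app tz_rep_app[OF na] by simp
    hence "mstep k B' (bu @ b # a # bv)" using pB h(1) by (simp add: swap_mstep)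
    thus ?thesis using h(4) d(2) mstep_mle mle_refl by blast
  next
    fix a b assume "us @ y # x # vs \<in> Sh_c A' B'"
    thus ?thesis using d(2) mle_refl by blast
  next
    fix a b assume h: "b \<in> set B'" "a \<in> set A'" "x = replicate (length A') 0 @ b"
      "y = a @ replicate (length B') 0"
    have False using bad_pair[OF pA pB h(2,1)] c lN h(3,4) by simp
    thus ?thesis ..
  qed
qed

lemma step_bwd:
  assumes N: "N' \<in> Sh_c A' B'" and pA: "packed k A'" and pB: "packed k B'" and st: "mstep k N N'"
  shows "\<exists>A'' B''. packed k A'' \<and> packed k B'' \<and> mle k A'' A' \<and> mle k B'' B' \<and> N \<in> Sh_c A'' B''"
proof -
  obtain us x y vs where d: "N = us@x#y#vs" "N' = us@y#x#vs" and c: "tz x + lz y \<ge> length N"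
    using st by (auto simp: mstep_iff)
  have lN: "length N = length A' + length B'"
    using length_shuffles[OF N[unfolded Sh_c_def]] d by simp
  from sh_cases[OF N[unfolded d(2)] pA pB] show ?thesis
  proof (elim disjE exE conjE)
    fix au a b av assume h: "A' = au @ a # b # av" "y = a @ replicate (length B') 0"
      "x = b @ replicate (length B') 0" "us @ x # y # vs \<in> Sh_c (au @ b # a # av) B'"
    have na: "\<exists>z\<in>set a. z \<noteq> 0" using nz_of_packed[OF pA] h(1) by simp
    have p2: "packed k (au @ b # a # av)" using pA h(1) packed_cong[of "au @ b # a # av" A'] by auto
    have "tz b + lz a \<ge> length (au @ b # a # av)" using c lN h tz_app_rep lz_app_rep[OF na] by simp
    hence "mstep k (au @ b # a # av) A'" using p2 h(1) swap_mstep by blast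
    thus ?thesis using h(4) d(1) mstep_mle mle_refl p2 pB by blast
  next
    fix bu a b bv assume h: "B' = bu @ a # b # bv" "y = replicate (length A') 0 @ a"
      "x = replicate (length A') 0 @ b" "us @ x # y # vs \<in> Sh_c A' (bu @ b # a # bv)"
    have nb: "\<exists>z\<in>set b. z \<noteq> 0" using nz_of_packed[OF pB] h(1) by simp
    have p2: "packed k (bu @ b # a # bv)" using pB h(1) packed_cong[of "bu @ b # a # bv" B'] by auto
    have "tz b + lz a \<ge> length (bu @ b # a # bv)" using c lN h lz_rep_app tz_rep_app[OF nb] by simp
    hence "mstep k (bu @ b # a # bv) B'" using p2 h(1) swap_mstep by blast
    thus ?thesis using h(4) d(1) mstep_mle mle_refl p2 pA by blast
  next
    fix a b assume h: "a \<in> set A'" "b \<in> set B'" "y = a @ replicate (length B') 0"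
      "x = replicate (length A') 0 @ b"
    have False using bad_pair[OF pA pB h(1,2)] c lN h(3,4) by simp
    thus ?thesis ..
  next
    fix a b assume "us @ x # y # vs \<in> Sh_c A' B'"
    thus ?thesis using d(1) mle_refl pA pB by blast
  qed
qed


lemma app_in_shuffles: "xs @ ys \<in> shuffles xs ys"
  by (induction xs) (auto intro: Cons_in_shuffles_leftI)

lemma ov_in_Sh: "ov A B \<in> Sh_c A B"
  unfolding ov_def Sh_c_def by (rule app_in_shuffles)

lemma un_in_Sh: "un A B \<in> Sh_c A B"
  unfolding un_def Sh_c_def by (subst shuffles_commutes) (rule app_in_shuffles)

lemma part1_fwd:
  assumes "mle k (ov A B) M" "packed k A" "packed k B"
  shows "\<exists>A' B'. packed k A' \<and> packed k B' \<and> mle k A A' \<and> mle k B B' \<and> M \<in> Sh_c A' B'"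
  using assms(1)[unfolded mle_def]
proof (induction rule: rtranclp_induct)
  case base thus ?case using assms(2,3) ov_in_Sh mle_refl by blast
next
  case (step N N')
  then obtain A' B' where h: "packed k A'" "packed k B'" "mle k A A'" "mle k B B'" "N \<in> Sh_c A' B'"
    by blast
  from step_fwd[OF h(5,1,2) step(2)] obtain A'' B'' where
    h2: "mle k A' A''" "mle k B' B''" "N' \<in> Sh_c A'' B''" by blast
  have "packed k A''" "packed k B''" using mle_props[OF h2(1)] mle_props[OF h2(2)] h by auto
  thus ?case using h h2 mle_trans by blast
qed

lemma part2_fwd:
  assumes "mle k M (un A B)" "packed k A" "packed k B"
  shows "\<exists>A' B'. packed k A' \<and> packed k B' \<and> mle k A' A \<and> mle k B' B \<and> M \<in> Sh_c A' B'"
  using assms(1)[unfolded mle_def]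
proof (induction rule: converse_rtranclp_induct)
  case base thus ?case using assms(2,3) un_in_Sh mle_refl by blast
next
  case (step N N')
  then obtain A' B' where h: "packed k A'" "packed k B'" "mle k A' A" "mle k B' B" "N' \<in> Sh_c A' B'"
    by blast
  from step_bwd[OF h(5,1,2) step(1)] obtain A'' B'' where
    h2: "packed k A''" "packed k B''" "mle k A'' A'" "mle k B'' B'" "N \<in> Sh_c A'' B''" by blast
  thus ?case using h h2 mle_trans by blast
qed

lemma part1_bwd:
  assumes M: "packed k M" and pA: "packed k A" and pB: "packed k B"
    and pA': "packed k A'" and pB': "packed k B'"
    and mA: "mle k A A'" and mB: "mle k B B'" and sh: "M \<in> Sh_c A' B'"
  shows "mle k (ov A B) M"
proof -
  have sA: "set A' = set A" "length A' = length A" using mle_props[OF mA] by auto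
  have sB: "set B' = set B" "length B' = length B" using mle_props[OF mB] by auto
  define n1 where "n1 = length A"
  define n2 where "n2 = length B"
  define f where "f = (\<lambda>c::nat list. c @ replicate n2 0)"
  define g where "g = (\<lambda>c::nat list. replicate n1 0 @ c)"
  have sh': "M \<in> shuffles (map f A') (map g B')"
    using sh sA sB unfolding Sh_c_def f_def g_def n1_def n2_def by simp
  have ovAB: "ov A B = [] @ map f A @ map g B" unfolding ov_def f_def g_def n1_def n2_def by simp
  have ovA'B: "ov A' B = map f A' @ map g B @ []" unfolding ov_def f_def g_def n1_def n2_def using sA by simp
  have ovA'B': "ov A' B' = map f A' @ map g B'" unfolding ov_def f_def g_def n1_def n2_def using sA sB by simp
  have lM: "length M = n1 + n2" using length_shuffles[OF sh'] sA sB n1_def n2_def by simp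
  have p0: "packed k (ov A B)"
    using M set_shuffles[OF sh'] lM sA sB packed_cong[of "ov A B" M] unfolding ovAB n1_def n2_def by simp
  have m1: "mle k ([] @ map f A @ map g B) ([] @ map f A' @ map g B)"
  proof (rule mle_ctx[OF mA])
    show "packed k ([] @ map f A @ map g B)" using p0 ovAB by simp
    fix c d assume "c \<in> set A" "d \<in> set A" "length A \<le> tz c + lz d"
    thus "length [] + length A + length (map g B) \<le> tz (f c) + lz (f d)"
      unfolding f_def using tz_app_rep lz_app_rep[OF nz_of_packed[OF pA]] n2_def by simp
  qed
  have p1: "packed k (map f A' @ map g B @ [])" using mle_props[OF m1] p0 ovAB by simp
  have m2: "mle k (map f A' @ map g B @ []) (map f A' @ map g B' @ [])"
  proof (rule mle_ctx[OF mB p1])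
    fix c d assume "c \<in> set B" "d \<in> set B" "length B \<le> tz c + lz d"
    thus "length (map f A') + length B + length [] \<le> tz (g c) + lz (g d)"
      unfolding g_def using lz_rep_app tz_rep_app[OF nz_of_packed[OF pB]] n1_def sA by simp
  qed
  have p2: "packed k ([] @ map f A' @ map g B')" using mle_props[OF m2] p1 by simp
  have m3: "mle k ([] @ map f A' @ map g B') ([] @ M)"
  proof (rule shuffle_up[OF sh' _ p2], intro ballI)
    fix x y assume "x \<in> set (map f A')" "y \<in> set (map g B')"
    thus "length ([] @ map f A' @ map g B') \<le> tz x + lz y"
      unfolding f_def g_def using tz_app_rep lz_rep_app sA sB n1_def n2_def by auto
  qed
  show ?thesis using m1 m2 m3 ovAB by (simp add: mle_trans)
qed

lemma part2_bwd:
  assumes M: "packed k M" and pA: "packed k A" and pB: "packed k B"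
    and pA': "packed k A'" and pB': "packed k B'"
    and mA: "mle k A' A" and mB: "mle k B' B" and sh: "M \<in> Sh_c A' B'"
  shows "mle k M (un A B)"
proof -
  have sA: "set A' = set A" "length A' = length A" using mle_props[OF mA] by auto
  have sB: "set B' = set B" "length B' = length B" using mle_props[OF mB] by auto
  define n1 where "n1 = length A"
  define n2 where "n2 = length B"
  define f where "f = (\<lambda>c::nat list. c @ replicate n2 0)"
  define g where "g = (\<lambda>c::nat list. replicate n1 0 @ c)"
  have sh': "M \<in> shuffles (map f A') (map g B')"
    using sh sA sB unfolding Sh_c_def f_def g_def n1_def n2_def by simp
  have unAB: "un A B = [] @ map g B @ map f A" unfolding un_def f_def g_def n1_def n2_def by simp
  have lM: "length M = n1 + n2" using length_shuffles[OF sh'] sA sB n1_def n2_def by simp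
  have m1: "mle k ([] @ M) ([] @ map g B' @ map f A')"
  proof (rule shuffle_down[OF sh' _], intro ballI)
    fix x y assume "x \<in> set (map f A')" "y \<in> set (map g B')"
    thus "length ([] @ M) \<le> tz x + lz y"
      unfolding f_def g_def using tz_app_rep lz_rep_app lM by auto
  qed (simp add: M)
  have p1: "packed k (map g B' @ map f A' @ [])" using mle_props[OF m1] M by simp
  have m2: "mle k (map g B' @ map f A' @ []) (map g B' @ map f A @ [])"
  proof (rule mle_ctx[OF mA p1])
    fix c d assume "c \<in> set A'" "d \<in> set A'" "length A' \<le> tz c + lz d"
    thus "length (map g B') + length A' + length [] \<le> tz (f c) + lz (f d)"
      unfolding f_def using tz_app_rep lz_app_rep[OF nz_of_packed[OF pA']] n2_def sB by simp
  qed
  have p2: "packed k ([] @ map g B' @ map f A)" using mle_props[OF m2] p1 by simp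
  have m3: "mle k ([] @ map g B' @ map f A) ([] @ map g B @ map f A)"
  proof (rule mle_ctx[OF mB p2])
    fix c d assume "c \<in> set B'" "d \<in> set B'" "length B' \<le> tz c + lz d"
    thus "length [] + length B' + length (map f A) \<le> tz (g c) + lz (g d)"
      unfolding g_def using lz_rep_app tz_rep_app[OF nz_of_packed[OF pB']] n1_def by simp
  qed
  show ?thesis using m1 m2 m3 unAB by (simp add: mle_trans)
qed

theorem lemma2p1:
  fixes k :: nat and M A B :: mat
  assumes "k \<ge> 1" and "packed k M" and "packed k A" and "packed k B"
  shows "(mle k (ov A B) M \<longleftrightarrow>
            (\<exists>A' B'. packed k A' \<and> packed k B' \<and> mle k A A' \<and> mle k B B' \<and> M \<in> Sh_c A' B'))
       \<and> (mle k M (un A B) \<longleftrightarrow>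
            (\<exists>A' B'. packed k A' \<and> packed k B' \<and> mle k A' A \<and> mle k B' B \<and> M \<in> Sh_c A' B'))"
  using part1_fwd[OF _ assms(3,4)] part2_fwd[OF _ assms(3,4)]
    part1_bwd[OF assms(2,3,4)] part2_bwd[OF assms(2,3,4)] by blast

end
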